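(* Let $F:\{0,1\}^4\to\mathbb{Q}_{\ge0}$. Suppose that $F(\overline{e_1}),F(\overline{e_2}),F(\overline{e_3}),F(\overline{e_4})$ are not all zero, that $F(x_1,x_2,x_3,x_4)=0$ whenever $x_1+x_2+x_3+x_4$ is even, and that for all $x_1,x_2,x_3,x_4\in\{0,1\}$, $F(x_1,x_2,x_3,x_4)F(1-x_1,1-x_2,1-x_3,1-x_4)\le F(x_1,x_2,1-x_3,1-x_4)F(1-x_1,1-x_2,x_3,x_4)+F(x_1,1-x_2,x_3,1-x_4)F(1-x_1,x_2,1-x_3,x_4)+F(x_1,1-x_2,1-x_3,x_4)F(1-x_1,x_2,x_3,1-x_4)$. Then $F$ has a matchings circuit.
   Context: $e_i\in\{0,1\}^4$ is the $i$-th unit vector and $\overline{x}$ denotes the complement $(1-x_1,\dots,1-x_4)$. A matchings circuit $G$ consists of: a finite set $J$ of incidences; a finite vertex set $V$ with sets $J_v$ partitioning $J$; a set $A\subseteq J$ of external edges; a partition $E$ of $J\setminus A$ into pairs (internal edges); a rational edge-weight $w(e)\ge0$ for each $e\in E$; and a rational fugacity $\lambda(v)\ge0$ for each $v$. For $F'\subseteq A\cup E$, $\deg_{F'}(v)$ is the number of incidences in $J_v$ belonging to edges of $F'$; $\mathrm{wt}_G(F')=0$ if some $\deg_{F'}(v)\ge2$, else $\prod_{v:\deg_{F'}(v)=0}\lambda(v)\prod_{e\in F'\cap E}w(e)$. The signature $[\![G]\!]:\{0,1\}^A\to\mathbb{Q}_{\ge0}$ is $[\![G]\!](x)=\sum\mathrm{wt}_G(F')$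 over $F'\subseteq A\cup E$ with $F'\cap A=\{a:x_a=1\}$. $F$ has a matchings circuit if $F=[\![G]\!]$ for some $G$ with $A$ identified with $\{1,2,3,4\}$. *)

theory Defs
  imports Complex_Main
begin

text \<open>Incidences and vertices are natural numbers.
  inc v is the set J_v of incidences at vertex v; ext i (i = 1..4) is the
  external edge (an incidence in A) identified with the i-th variable, so
  A = ext ` {1..4}; E is the set of internal edges, each a 2-element set of
  incidences; w is the edge weight and lam the fugacity.\<close>

record mcirc =
  J :: "nat set"
  V :: "nat set"
  inc :: "nat \<Rightarrow> nat set"
  ext :: "nat \<Rightarrow> nat"
  E :: "nat set set"
  w :: "nat set \<Rightarrow> rat"
  lam :: "nat \<Rightarrow> rat"

definition ext_set :: "mcirc \<Rightarrow> nat set" where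
  "ext_set G = ext G ` {1..4::nat}"

definition valid_mcirc :: "mcirc \<Rightarrow> bool" where
  "valid_mcirc G \<longleftrightarrow>
     finite (J G) \<and> finite (V G) \<and>
     (\<forall>v\<in>V G. inc G v \<subseteq> J G) \<and>
     (\<forall>v\<in>V G. \<forall>u\<in>V G. u \<noteq> v \<longrightarrow> inc G u \<inter> inc G v = {}) \<and>
     (\<Union>v\<in>V G. inc G v) = J G \<and>
     inj_on (ext G) {1..4} \<and> ext_set G \<subseteq> J G \<and>
     (\<forall>e\<in>E G. card e = 2) \<and>
     (\<forall>e\<in>E G. \<forall>e'\<in>E G. e \<noteq> e' \<longrightarrow> e \<inter> e' = {}) \<and>
     \<Union>(E G) = J G - ext_set G \<and>
     (\<forall>e\<in>E G. w G e \<ge> 0) \<and>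
     (\<forall>v\<in>V G. lam G v \<ge> 0)"

definition deg :: "mcirc \<Rightarrow> nat set \<Rightarrow> nat set set \<Rightarrow> nat \<Rightarrow> nat" where
  "deg G S M v = card (inc G v \<inter> (S \<union> \<Union>M))"

definition wt :: "mcirc \<Rightarrow> nat set \<Rightarrow> nat set set \<Rightarrow> rat" where
  "wt G S M = (if \<exists>v\<in>V G. deg G S M v \<ge> 2 then 0
     else (\<Prod>v\<in>{v\<in>V G. deg G S M v = 0}. lam G v) * (\<Prod>e\<in>M. w G e))"

definition active :: "nat \<Rightarrow> nat \<Rightarrow> nat \<Rightarrow> nat \<Rightarrow> nat set" where
  "active x1 x2 x3 x4 = {i. (i = 1 \<and> x1 = 1) \<or> (i = 2 \<and> x2 = 1) \<or>
                           (i = 3 \<and> x3 = 1) \<or> (i = 4 \<and> x4 = 1)}"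

definition signature :: "mcirc \<Rightarrow> nat \<Rightarrow> nat \<Rightarrow> nat \<Rightarrow> nat \<Rightarrow> rat" where
  "signature G x1 x2 x3 x4 =
     (\<Sum>M\<in>Pow (E G). wt G (ext G ` active x1 x2 x3 x4) M)"

definition has_matchings_circuit :: "(nat \<Rightarrow> nat \<Rightarrow> nat \<Rightarrow> nat \<Rightarrow> rat) \<Rightarrow> bool" where
  "has_matchings_circuit F \<longleftrightarrow>
     (\<exists>G. valid_mcirc G \<and>
        (\<forall>x1\<in>{0,1}. \<forall>x2\<in>{0,1}. \<forall>x3\<in>{0,1}. \<forall>x4\<in>{0,1}.
           F x1 x2 x3 x4 = signature G x1 x2 x3 x4))"

end

theory Submission
  imports Defs
begin


definition inc0 :: "nat \<Rightarrow> nat set" where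
 "inc0 v = (if v = 1 then {1,12,13,14,15} else if v = 2 then {2,21,23,24,25} else
   if v = 3 then {3,31,32,34,35} else if v = 4 then {4,41,42,43,45} else if v = 5 then {51,52,53,54} else {})"

lemma five: "{1..5::nat} = {1,2,3,4,5}" by auto
lemma four: "{1..4::nat} = {1,2,3,4}" by auto

definition perf :: "nat set \<Rightarrow> bool" where "perf S \<longleftrightarrow> (\<forall>v\<in>{1..5::nat}. card (inc0 v \<inter> S) = 1)"
definition okk :: "nat set \<Rightarrow> bool" where "okk S \<longleftrightarrow> (\<forall>v\<in>{1..5::nat}. card (inc0 v \<inter> S) \<le> 1)"

lemma okk_eq: "okk S \<longleftrightarrow> card ({1,12,13,14,15} \<inter> S) \<le> 1 \<and> card ({2,21,23,24,25} \<inter> S) \<le> 1 \<and>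
   card ({3,31,32,34,35} \<inter> S) \<le> 1 \<and> card ({4,41,42,43,45} \<inter> S) \<le> 1 \<and> card ({51,52,53,54} \<inter> S) \<le> 1"
  unfolding okk_def five by (simp add: inc0_def)
lemma perf_eq: "perf S \<longleftrightarrow> card ({1,12,13,14,15} \<inter> S) = 1 \<and> card ({2,21,23,24,25} \<inter> S) = 1 \<and>
   card ({3,31,32,34,35} \<inter> S) = 1 \<and> card ({4,41,42,43,45} \<inter> S) = 1 \<and> card ({51,52,53,54} \<inter> S) = 1"
  unfolding perf_def five by (simp add: inc0_def)

definition PM :: "(nat set \<Rightarrow> rat) \<Rightarrow> nat set \<Rightarrow> nat set set \<Rightarrow> rat" where
  "PM W S E' = (\<Sum>M\<in>Pow E'. if perf (S \<union> \<Union>M) then (\<Prod>e\<in>M. W e) else 0)"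

lemma PM_empty: "PM W S {} = (if perf S then 1 else 0)"
  by (simp add: PM_def)

lemma perf_okk: "perf S \<Longrightarrow> okk S" by (auto simp: perf_def okk_def)
lemma okk_mono: "okk T \<Longrightarrow> S \<subseteq> T \<Longrightarrow> okk S"
  unfolding okk_def
proof (intro ballI)
  fix v :: nat assume "\<forall>v\<in>{1..5::nat}. card (inc0 v \<inter> T) \<le> 1" "S \<subseteq> T" "v \<in> {1..5}"
  moreover have "finite (inc0 v)" by (simp add: inc0_def)
  ultimately show "card (inc0 v \<inter> S) \<le> 1"
    by (meson card_mono finite_Int inf_mono order.refl order_trans)
qed

lemma PM_bad: "\<not> okk S \<Longrightarrow> finite E' \<Longrightarrow> PM W S E' = 0"
  unfolding PM_def
  by (rule sum.neutral) (auto dest!: perf_okk okk_mono[where S = S])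

lemma PM_insert:
  assumes "e \<notin> E'" "finite E'"
  shows "PM W S (insert e E') = PM W S E' + (if okk (S \<union> e) then W e * PM W (S \<union> e) E' else 0)"
proof -
  have "PM W S (insert e E') = PM W S E' + W e * PM W (S \<union> e) E'"
  proof -
    have inj: "inj_on (insert e) (Pow E')" using assms(1) by (auto simp: inj_on_def)
    have "PM W S (insert e E') = PM W S E' + (\<Sum>M\<in>insert e ` Pow E'. if perf (S \<union> \<Union>M) then (\<Prod>e\<in>M. W e) else 0)"
      unfolding PM_def Pow_insert using assms by (subst sum.union_disjoint) auto
    also have "(\<Sum>M\<in>insert e ` Pow E'. if perf (S \<union> \<Union>M) then (\<Prod>e\<in>M. W e) else 0)
       = (\<Sum>M\<in>Pow E'. if perf (S \<union> e \<union> \<Union>M) then W e * (\<Prod>e\<in>M. W e) else 0)"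
    proof (subst sum.reindex[OF inj], rule sum.cong, simp)
      fix M assume "M \<in> Pow E'"
      then have "e \<notin> M" "finite M" using assms finite_subset by auto
      then show "((\<lambda>M. if perf (S \<union> \<Union> M) then \<Prod>e\<in>M. W e else 0) \<circ> insert e) M
          = (if perf (S \<union> e \<union> \<Union> M) then W e * prod W M else 0)"
        by (simp add: Un_assoc)
    qed
    also have "\<dots> = W e * PM W (S \<union> e) E'" unfolding PM_def
      by (simp add: sum_distrib_left if_distrib cong: if_cong)
    finally show ?thesis .
  qed
  moreover have "\<not> okk (S \<union> e) \<Longrightarrow> PM W (S \<union> e) E' = 0" using PM_bad assms(2) by blast
  ultimately show ?thesis by simp
qed

fun PMl :: "(nat set \<Rightarrow> rat) \<Rightarrow> nat set \<Rightarrow> nat set list \<Rightarrow> rat" where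
  "PMl W S [] = (if perf S then 1 else 0)"
| "PMl W S (e#es) = PMl W S es + (if okk (S \<union> e) then W e * PMl W (S \<union> e) es else 0)"

lemma PM_PMl: "distinct es \<Longrightarrow> PM W S (set es) = PMl W S es"
  by (induction es arbitrary: S) (simp_all add: PM_empty PM_insert)

definition E0l :: "nat set list" where
 "E0l = [{12,21},{13,31},{14,41},{15,51},{23,32},{24,42},{25,52},{34,43},{35,53},{45,54}]"

lemma E0l_distinct: "distinct E0l" by (simp add: E0l_def doubleton_eq_iff)

lemma PMl_0: "PMl W {} E0l = 0"
  unfolding E0l_def by (simp add: okk_eq perf_eq)

lemma PMl_1: "PMl W {4} E0l = W{12,21}*W{35,53} + W{13,31}*W{25,52} + W{15,51}*W{23,32}"
  unfolding E0l_def by (simp add: okk_eq perf_eq)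

lemma PMl_2: "PMl W {3} E0l = W{12,21}*W{45,54} + W{14,41}*W{25,52} + W{15,51}*W{24,42}"
  unfolding E0l_def by (simp add: okk_eq perf_eq)

lemma PMl_3: "PMl W {3,4} E0l = 0"
  unfolding E0l_def by (simp add: okk_eq perf_eq)

lemma PMl_4: "PMl W {2} E0l = W{13,31}*W{45,54} + W{14,41}*W{35,53} + W{15,51}*W{34,43}"
  unfolding E0l_def by (simp add: okk_eq perf_eq)

lemma PMl_5: "PMl W {2,4} E0l = 0"
  unfolding E0l_def by (simp add: okk_eq perf_eq)

lemma PMl_6: "PMl W {2,3} E0l = 0"
  unfolding E0l_def by (simp add: okk_eq perf_eq)

lemma PMl_7: "PMl W {2,3,4} E0l = W{15,51}"
  unfolding E0l_def by (simp add: okk_eq perf_eq)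

lemma PMl_8: "PMl W {1} E0l = W{23,32}*W{45,54} + W{24,42}*W{35,53} + W{25,52}*W{34,43}"
  unfolding E0l_def by (simp add: okk_eq perf_eq)

lemma PMl_9: "PMl W {1,4} E0l = 0"
  unfolding E0l_def by (simp add: okk_eq perf_eq)

lemma PMl_10: "PMl W {1,3} E0l = 0"
  unfolding E0l_def by (simp add: okk_eq perf_eq)

lemma PMl_11: "PMl W {1,3,4} E0l = W{25,52}"
  unfolding E0l_def by (simp add: okk_eq perf_eq)

lemma PMl_12: "PMl W {1,2} E0l = 0"
  unfolding E0l_def by (simp add: okk_eq perf_eq)

lemma PMl_13: "PMl W {1,2,4} E0l = W{35,53}"
  unfolding E0l_def by (simp add: okk_eq perf_eq)

lemma PMl_14: "PMl W {1,2,3} E0l = W{45,54}"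
  unfolding E0l_def by (simp add: okk_eq perf_eq)

lemma PMl_15: "PMl W {1,2,3,4} E0l = 0"
  unfolding E0l_def by (simp add: okk_eq perf_eq)

definition J0 :: "nat set" where
  "J0 = {1,2,3,4,12,13,14,15,21,23,24,25,31,32,34,35,41,42,43,45,51,52,53,54}"

definition Gc :: "(nat set \<Rightarrow> rat) \<Rightarrow> mcirc" where
  "Gc W = \<lparr>J = J0, V = {1,2,3,4,5}, inc = inc0, ext = id, E = set E0l, w = W, lam = (\<lambda>_. 0)\<rparr>"

lemma Gc_valid: assumes "\<forall>e\<in>set E0l. W e \<ge> 0" shows "valid_mcirc (Gc W)"
proof -
  have e: "ext_set (Gc W) = {1,2,3,4}" unfolding ext_set_def Gc_def four by simp
  show ?thesis
    unfolding valid_mcirc_def e using assms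
    by (simp add: Gc_def five J0_def inc0_def E0l_def; auto)
qed

lemma Gc_wt: "wt (Gc W) S M = (if perf (S \<union> \<Union>M) then prod W M else 0)"
proof -
  let ?d = "\<lambda>v. card (inc0 v \<inter> (S \<union> \<Union>M))"
  have w: "wt (Gc W) S M = (if \<exists>v\<in>{1,2,3,4,5}. ?d v \<ge> 2 then 0
     else (\<Prod>v\<in>{v\<in>{1,2,3,4,5}. ?d v = 0}. (0::rat)) * prod W M)"
    unfolding wt_def deg_def Gc_def by simp
  have p: "perf (S \<union> \<Union>M) \<longleftrightarrow> (\<forall>v\<in>{1,2,3,4,5}. ?d v = 1)"
    unfolding perf_def five ..
  show ?thesis
  proof (cases "perf (S \<union> \<Union>M)")
    case True
    then have E: "{v \<in> {1,2,3,4,5::nat}. ?d v = 0} = {}" using p by auto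
    have nb: "\<not> (\<exists>v\<in>{1,2,3,4,5::nat}. ?d v \<ge> 2)" using True p by auto
    show ?thesis unfolding w E using True nb by (simp only: if_False if_True prod.empty mult_1)
  next
    case False
    then obtain v where v: "v \<in> {1,2,3,4,5::nat}" "?d v \<noteq> 1" using p by blast
    show ?thesis
    proof (cases "\<exists>v\<in>{1,2,3,4,5}. ?d v \<ge> 2")
      case True then show ?thesis unfolding w using False by simp
    next
      case c: False
      then have "?d v = 0" using v by force
      then have "(\<Prod>v\<in>{v \<in> {1,2,3,4,5::nat}. ?d v = 0}. (0::rat)) = 0"
        using v by (subst prod_zero_iff) auto
      then show ?thesis unfolding w using False c by simp
    qed
  qed
qed

lemma active_eq: "active x1 x2 x3 x4 = (if x1=1 then {1} else {}) \<union> (if x2=1 then {2} else {}) \<union>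
   (if x3=1 then {3} else {}) \<union> (if x4=1 then {4} else {})"
  by (auto simp: active_def)

lemma Gc_sig: "signature (Gc W) x1 x2 x3 x4 = PMl W (active x1 x2 x3 x4) E0l"
proof -
  have "signature (Gc W) x1 x2 x3 x4 = PM W (active x1 x2 x3 x4) (set E0l)"
    unfolding signature_def PM_def Gc_wt by (simp add: Gc_def)
  then show ?thesis using PM_PMl E0l_distinct by simp
qed

lemma sig_0: "signature (Gc W) 0 0 0 0 = 0"
proof -
  have "active 0 0 0 0 = {}" by (auto simp: active_def)
  then show ?thesis unfolding Gc_sig by (simp only: PMl_0)
qed

lemma sig_1: "signature (Gc W) 0 0 0 1 = W{12,21}*W{35,53} + W{13,31}*W{25,52} + W{15,51}*W{23,32}"
proof -
  have "active 0 0 0 1 = {4}" by (auto simp: active_def)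
  then show ?thesis unfolding Gc_sig by (simp only: PMl_1)
qed

lemma sig_2: "signature (Gc W) 0 0 1 0 = W{12,21}*W{45,54} + W{14,41}*W{25,52} + W{15,51}*W{24,42}"
proof -
  have "active 0 0 1 0 = {3}" by (auto simp: active_def)
  then show ?thesis unfolding Gc_sig by (simp only: PMl_2)
qed

lemma sig_3: "signature (Gc W) 0 0 1 1 = 0"
proof -
  have "active 0 0 1 1 = {3,4}" by (auto simp: active_def)
  then show ?thesis unfolding Gc_sig by (simp only: PMl_3)
qed

lemma sig_4: "signature (Gc W) 0 1 0 0 = W{13,31}*W{45,54} + W{14,41}*W{35,53} + W{15,51}*W{34,43}"
proof -
  have "active 0 1 0 0 = {2}" by (auto simp: active_def)
  then show ?thesis unfolding Gc_sig by (simp only: PMl_4)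
qed

lemma sig_5: "signature (Gc W) 0 1 0 1 = 0"
proof -
  have "active 0 1 0 1 = {2,4}" by (auto simp: active_def)
  then show ?thesis unfolding Gc_sig by (simp only: PMl_5)
qed

lemma sig_6: "signature (Gc W) 0 1 1 0 = 0"
proof -
  have "active 0 1 1 0 = {2,3}" by (auto simp: active_def)
  then show ?thesis unfolding Gc_sig by (simp only: PMl_6)
qed

lemma sig_7: "signature (Gc W) 0 1 1 1 = W{15,51}"
proof -
  have "active 0 1 1 1 = {2,3,4}" by (auto simp: active_def)
  then show ?thesis unfolding Gc_sig by (simp only: PMl_7)
qed

lemma sig_8: "signature (Gc W) 1 0 0 0 = W{23,32}*W{45,54} + W{24,42}*W{35,53} + W{25,52}*W{34,43}"
proof -
  have "active 1 0 0 0 = {1}" by (auto simp: active_def)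
  then show ?thesis unfolding Gc_sig by (simp only: PMl_8)
qed

lemma sig_9: "signature (Gc W) 1 0 0 1 = 0"
proof -
  have "active 1 0 0 1 = {1,4}" by (auto simp: active_def)
  then show ?thesis unfolding Gc_sig by (simp only: PMl_9)
qed

lemma sig_10: "signature (Gc W) 1 0 1 0 = 0"
proof -
  have "active 1 0 1 0 = {1,3}" by (auto simp: active_def)
  then show ?thesis unfolding Gc_sig by (simp only: PMl_10)
qed

lemma sig_11: "signature (Gc W) 1 0 1 1 = W{25,52}"
proof -
  have "active 1 0 1 1 = {1,3,4}" by (auto simp: active_def)
  then show ?thesis unfolding Gc_sig by (simp only: PMl_11)
qed

lemma sig_12: "signature (Gc W) 1 1 0 0 = 0"
proof -
  have "active 1 1 0 0 = {1,2}" by (auto simp: active_def)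
  then show ?thesis unfolding Gc_sig by (simp only: PMl_12)
qed

lemma sig_13: "signature (Gc W) 1 1 0 1 = W{35,53}"
proof -
  have "active 1 1 0 1 = {1,2,4}" by (auto simp: active_def)
  then show ?thesis unfolding Gc_sig by (simp only: PMl_13)
qed

lemma sig_14: "signature (Gc W) 1 1 1 0 = W{45,54}"
proof -
  have "active 1 1 1 0 = {1,2,3}" by (auto simp: active_def)
  then show ?thesis unfolding Gc_sig by (simp only: PMl_14)
qed

lemma sig_15: "signature (Gc W) 1 1 1 1 = 0"
proof -
  have "active 1 1 1 1 = {1,2,3,4}" by (auto simp: active_def)
  then show ?thesis unfolding Gc_sig by (simp only: PMl_15)
qed



definition Sx :: "(nat \<Rightarrow> rat) \<Rightarrow> rat" where "Sx c = (c 1 + c 2 + c 3 + c 4)/2"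
definition Dx :: "(nat \<Rightarrow> rat) \<Rightarrow> nat \<Rightarrow> nat \<Rightarrow> rat" where "Dx c i j = c i + c j - Sx c"
definition Qx :: "(nat \<Rightarrow> rat) \<Rightarrow> rat" where "Qx c = (Sx c - \<bar>Dx c 1 2\<bar> - \<bar>Dx c 1 3\<bar> - \<bar>Dx c 1 4\<bar>)/3"
definition sx :: "(nat \<Rightarrow> rat) \<Rightarrow> nat \<Rightarrow> nat \<Rightarrow> rat" where "sx c i j = (Dx c i j + \<bar>Dx c i j\<bar> + Qx c)/2"

lemma Q_nonneg:
  assumes "c 1 \<ge> 0" "c 2 \<ge> 0" "c 3 \<ge> 0" "c 4 \<ge> 0"
    "c 1 \<le> c 2 + c 3 + c 4" "c 2 \<le> c 1 + c 3 + c 4" "c 3 \<le> c 1 + c 2 + c 4" "c 4 \<le> c 1 + c 2 + c 3"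
  shows "Qx c \<ge> 0"
proof -
  have "2 * Sx c = c 1 + c 2 + c 3 + c 4" by (simp add: Sx_def)
  then show ?thesis using assms unfolding Qx_def Dx_def by (auto split: abs_split)
qed

lemma s_nonneg: "Qx c \<ge> 0 \<Longrightarrow> sx c i j \<ge> 0"
  unfolding sx_def by (simp split: abs_split)

lemma rows:
  shows "sx c 1 2 + sx c 1 3 + sx c 1 4 = c 1" "sx c 1 2 + sx c 2 3 + sx c 2 4 = c 2"
        "sx c 1 3 + sx c 2 3 + sx c 3 4 = c 3" "sx c 1 4 + sx c 2 4 + sx c 3 4 = c 4"
proof -
  have S2: "2 * Sx c = c 1 + c 2 + c 3 + c 4" by (simp add: Sx_def)
  have "Dx c 2 3 = - Dx c 1 4" "Dx c 2 4 = - Dx c 1 3" "Dx c 3 4 = - Dx c 1 2"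
    unfolding Dx_def using S2 by linarith+
  then have a23: "\<bar>Dx c 2 3\<bar> = \<bar>Dx c 1 4\<bar>" and a24: "\<bar>Dx c 2 4\<bar> = \<bar>Dx c 1 3\<bar>"
    and a34: "\<bar>Dx c 3 4\<bar> = \<bar>Dx c 1 2\<bar>" by simp_all
  show "sx c 1 2 + sx c 1 3 + sx c 1 4 = c 1" "sx c 1 2 + sx c 2 3 + sx c 2 4 = c 2"
        "sx c 1 3 + sx c 2 3 + sx c 3 4 = c 3" "sx c 1 4 + sx c 2 4 + sx c 3 4 = c 4"
    unfolding sx_def Qx_def a23 a24 a34 unfolding Dx_def using S2 by (simp_all add: field_simps)
qed

definition Rf :: "rat \<Rightarrow> rat \<Rightarrow> rat \<Rightarrow> rat \<Rightarrow> rat \<Rightarrow> rat \<Rightarrow> rat" where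
  "Rf B ai bi aj bj s = (if bi = 0 then ai/B else 0) + (if bj = 0 then aj/B else 0)
     + (if bi \<noteq> 0 \<and> bj \<noteq> 0 then s/(bi*bj) else 0)"

lemma R_sym: "Rf B ai bi aj bj s = Rf B aj bj ai bi s"
  unfolding Rf_def by (simp add: mult.commute)

lemma R_nonneg: "B > 0 \<Longrightarrow> ai \<ge> 0 \<Longrightarrow> bi \<ge> 0 \<Longrightarrow> aj \<ge> 0 \<Longrightarrow> bj \<ge> 0 \<Longrightarrow> s \<ge> 0 \<Longrightarrow> Rf B ai bi aj bj s \<ge> 0"
  unfolding Rf_def by simp

lemma term_nz: "bk \<noteq> 0 \<Longrightarrow> (bj = 0 \<Longrightarrow> s = 0) \<Longrightarrow> bj * Rf B ak bk aj bj s = s / bk"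
  unfolding Rf_def by (cases "bj = 0") (auto simp: field_simps)

lemma term_z: "bk = 0 \<Longrightarrow> bj * Rf B ak bk aj bj s = bj * ak / B"
  unfolding Rf_def by (cases "bj = 0") auto

lemma row:
  assumes "B = bk + bj + bl + bm" "B \<noteq> 0" "sj + sl + sm = ak * bk"
    "bj = 0 \<Longrightarrow> sj = 0" "bl = 0 \<Longrightarrow> sl = 0" "bm = 0 \<Longrightarrow> sm = 0"
  shows "bj * Rf B ak bk aj bj sj + bl * Rf B ak bk al bl sl + bm * Rf B ak bk am bm sm = ak"
proof (cases "bk = 0")
  case True
  then have "bj * Rf B ak bk aj bj sj + bl * Rf B ak bk al bl sl + bm * Rf B ak bk am bm sm
     = (bj + bl + bm) * ak / B" by (simp add: term_z add_divide_distrib distrib_right)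
  also have "\<dots> = ak" using assms True by simp
  finally show ?thesis .
next
  case False
  then have "bj * Rf B ak bk aj bj sj + bl * Rf B ak bk al bl sl + bm * Rf B ak bk am bm sm
     = sj / bk + sl / bk + sm / bk" using assms False by (simp add: term_nz)
  also have "\<dots> = (sj + sl + sm) / bk" by (simp add: add_divide_distrib)
  also have "\<dots> = ak * bk / bk" by (simp only: assms(3))
  also have "\<dots> = ak" using False by simp
  finally show ?thesis .
qed

lemma alg:
  fixes a b :: "nat \<Rightarrow> rat"
  assumes a0: "a 1 \<ge> 0" "a 2 \<ge> 0" "a 3 \<ge> 0" "a 4 \<ge> 0"
    and b0: "b 1 \<ge> 0" "b 2 \<ge> 0" "b 3 \<ge> 0" "b 4 \<ge> 0"
    and Bdef: "B = b 1 + b 2 + b 3 + b 4" and Bpos: "B > 0"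
    and i1: "a 1 * b 1 \<le> a 2 * b 2 + a 3 * b 3 + a 4 * b 4"
    and i2: "a 2 * b 2 \<le> a 1 * b 1 + a 3 * b 3 + a 4 * b 4"
    and i3: "a 3 * b 3 \<le> a 1 * b 1 + a 2 * b 2 + a 4 * b 4"
    and i4: "a 4 * b 4 \<le> a 1 * b 1 + a 2 * b 2 + a 3 * b 3"
    and rdef: "\<And>i j. r i j = Rf B (a i) (b i) (a j) (b j) (sx (\<lambda>k. a k * b k) i j)"
  shows "a 1 = b 2 * r 1 2 + b 3 * r 1 3 + b 4 * r 1 4"
    "a 2 = b 1 * r 1 2 + b 3 * r 2 3 + b 4 * r 2 4"
    "a 3 = b 1 * r 1 3 + b 2 * r 2 3 + b 4 * r 3 4"
    "a 4 = b 1 * r 1 4 + b 2 * r 2 4 + b 3 * r 3 4"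
    "r 1 2 \<ge> 0" "r 1 3 \<ge> 0" "r 1 4 \<ge> 0" "r 2 3 \<ge> 0" "r 2 4 \<ge> 0" "r 3 4 \<ge> 0"
proof -
  define c where "c = (\<lambda>k. a k * b k)"
  have c0: "c 1 \<ge> 0" "c 2 \<ge> 0" "c 3 \<ge> 0" "c 4 \<ge> 0" using a0 b0 by (simp_all add: c_def)
  have Q: "Qx c \<ge> 0" by (rule Q_nonneg) (use c0 i1 i2 i3 i4 in \<open>simp_all add: c_def\<close>)
  have sn: "\<And>i j. sx c i j \<ge> 0" using s_nonneg[OF Q] .
  note R = rows[of c]
  have cc: "c 1 = a 1 * b 1" "c 2 = a 2 * b 2" "c 3 = a 3 * b 3" "c 4 = a 4 * b 4" by (simp_all add: c_def)
  have z1: "b 1 = 0 \<Longrightarrow> sx c 1 2 = 0 \<and> sx c 1 3 = 0 \<and> sx c 1 4 = 0"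
    using R(1) sn[of 1 2] sn[of 1 3] sn[of 1 4] cc(1) by auto
  have z2: "b 2 = 0 \<Longrightarrow> sx c 1 2 = 0 \<and> sx c 2 3 = 0 \<and> sx c 2 4 = 0"
    using R(2) sn[of 1 2] sn[of 2 3] sn[of 2 4] cc(2) by auto
  have z3: "b 3 = 0 \<Longrightarrow> sx c 1 3 = 0 \<and> sx c 2 3 = 0 \<and> sx c 3 4 = 0"
    using R(3) sn[of 1 3] sn[of 2 3] sn[of 3 4] cc(3) by auto
  have z4: "b 4 = 0 \<Longrightarrow> sx c 1 4 = 0 \<and> sx c 2 4 = 0 \<and> sx c 3 4 = 0"
    using R(4) sn[of 1 4] sn[of 2 4] sn[of 3 4] cc(4) by auto
  have Bne: "B \<noteq> 0" using Bpos by simp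
  have rr: "\<And>i j. r i j = Rf B (a i) (b i) (a j) (b j) (sx c i j)" using rdef c_def by simp
  have B2: "B = b 2 + b 1 + b 3 + b 4" and B3: "B = b 3 + b 1 + b 2 + b 4" and B4: "B = b 4 + b 1 + b 2 + b 3"
    using Bdef by simp_all
  show "a 1 = b 2 * r 1 2 + b 3 * r 1 3 + b 4 * r 1 4"
    unfolding rr
    by (rule sym, rule row[OF Bdef Bne]) (use R(1) cc z2 z3 z4 in auto)
  show "a 2 = b 1 * r 1 2 + b 3 * r 2 3 + b 4 * r 2 4"
    unfolding rr R_sym[of B "a 1" "b 1" "a 2" "b 2"]
    by (rule sym, rule row[OF B2 Bne]) (use R(2) cc z1 z3 z4 in auto)
  show "a 3 = b 1 * r 1 3 + b 2 * r 2 3 + b 4 * r 3 4"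
    unfolding rr R_sym[of B "a 1" "b 1" "a 3" "b 3"] R_sym[of B "a 2" "b 2" "a 3" "b 3"]
    by (rule sym, rule row[OF B3 Bne]) (use R(3) cc z1 z2 z4 in auto)
  show "a 4 = b 1 * r 1 4 + b 2 * r 2 4 + b 3 * r 3 4"
    unfolding rr R_sym[of B "a 1" "b 1" "a 4" "b 4"] R_sym[of B "a 2" "b 2" "a 4" "b 4"] R_sym[of B "a 3" "b 3" "a 4" "b 4"]
    by (rule sym, rule row[OF B4 Bne]) (use R(4) cc z1 z2 z3 in auto)
  show "r 1 2 \<ge> 0" unfolding rr by (intro R_nonneg Bpos a0 b0 sn)
  show "r 1 3 \<ge> 0" unfolding rr by (intro R_nonneg Bpos a0 b0 sn)
  show "r 1 4 \<ge> 0" unfolding rr by (intro R_nonneg Bpos a0 b0 sn)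
  show "r 2 3 \<ge> 0" unfolding rr by (intro R_nonneg Bpos a0 b0 sn)
  show "r 2 4 \<ge> 0" unfolding rr by (intro R_nonneg Bpos a0 b0 sn)
  show "r 3 4 \<ge> 0" unfolding rr by (intro R_nonneg Bpos a0 b0 sn)
qed


theorem lemma20:
  fixes F :: "nat \<Rightarrow> nat \<Rightarrow> nat \<Rightarrow> nat \<Rightarrow> rat"
  assumes nonneg: "\<forall>x1\<in>{0,1}. \<forall>x2\<in>{0,1}. \<forall>x3\<in>{0,1}. \<forall>x4\<in>{0,1}. F x1 x2 x3 x4 \<ge> 0"
    and nz: "\<not> (F 0 1 1 1 = 0 \<and> F 1 0 1 1 = 0 \<and> F 1 1 0 1 = 0 \<and> F 1 1 1 0 = 0)"
    and even: "\<forall>x1\<in>{0,1}. \<forall>x2\<in>{0,1}. \<forall>x3\<in>{0,1}. \<forall>x4\<in>{0,1}.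
                 even (x1 + x2 + x3 + x4) \<longrightarrow> F x1 x2 x3 x4 = 0"
    and ineq: "\<forall>x1\<in>{0,1}. \<forall>x2\<in>{0,1}. \<forall>x3\<in>{0,1}. \<forall>x4\<in>{0,1}.
        F x1 x2 x3 x4 * F (1-x1) (1-x2) (1-x3) (1-x4)
        \<le> F x1 x2 (1-x3) (1-x4) * F (1-x1) (1-x2) x3 x4
         + F x1 (1-x2) x3 (1-x4) * F (1-x1) x2 (1-x3) x4
         + F x1 (1-x2) (1-x3) x4 * F (1-x1) x2 x3 (1-x4)"
  shows "has_matchings_circuit F"
proof -
  define a :: "nat \<Rightarrow> rat" where "a k = (if k = 1 then F 1 0 0 0 else if k = 2 then F 0 1 0 0
     else if k = 3 then F 0 0 1 0 else F 0 0 0 1)" for k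
  define b :: "nat \<Rightarrow> rat" where "b k = (if k = 1 then F 0 1 1 1 else if k = 2 then F 1 0 1 1
     else if k = 3 then F 1 1 0 1 else F 1 1 1 0)" for k
  define B where "B = b 1 + b 2 + b 3 + b 4"
  define r where "r i j = Rf B (a i) (b i) (a j) (b j) (sx (\<lambda>k. a k * b k) i j)" for i j
  have nn: "\<And>x1 x2 x3 x4. x1 \<in> {0,1} \<Longrightarrow> x2 \<in> {0,1} \<Longrightarrow> x3 \<in> {0,1} \<Longrightarrow> x4 \<in> {0,1} \<Longrightarrow> F x1 x2 x3 x4 \<ge> 0"
    using nonneg by blast
  have a0: "a 1 \<ge> 0" "a 2 \<ge> 0" "a 3 \<ge> 0" "a 4 \<ge> 0" by (simp_all add: a_def nn)
  have b0: "b 1 \<ge> 0" "b 2 \<ge> 0" "b 3 \<ge> 0" "b 4 \<ge> 0" by (simp_all add: b_def nn)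
  have nzb: "b 1 \<noteq> 0 \<or> b 2 \<noteq> 0 \<or> b 3 \<noteq> 0 \<or> b 4 \<noteq> 0" using nz by (simp add: b_def)
  have "b 1 > 0 \<or> b 2 > 0 \<or> b 3 > 0 \<or> b 4 > 0" using nzb b0 by (auto simp: less_le)
  then have Bpos: "B > 0" unfolding B_def by (elim disjE) (use b0 in linarith)+
  have i1: "a 1 * b 1 \<le> a 2 * b 2 + a 3 * b 3 + a 4 * b 4"
    using ineq[rule_format, of 1 0 0 0] by (simp add: a_def b_def mult.commute)
  have i2: "a 2 * b 2 \<le> a 1 * b 1 + a 3 * b 3 + a 4 * b 4"
    using ineq[rule_format, of 0 1 0 0] by (simp add: a_def b_def mult.commute add_ac)
  have i3: "a 3 * b 3 \<le> a 1 * b 1 + a 2 * b 2 + a 4 * b 4"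
    using ineq[rule_format, of 0 0 1 0] by (simp add: a_def b_def mult.commute add_ac)
  have i4: "a 4 * b 4 \<le> a 1 * b 1 + a 2 * b 2 + a 3 * b 3"
    using ineq[rule_format, of 0 0 0 1] by (simp add: a_def b_def mult.commute add_ac)
  note A = alg[OF a0 b0 B_def Bpos i1 i2 i3 i4 r_def]
  define W where "W e = (if e = {15,51} then b 1 else if e = {25,52} then b 2 else
     if e = {35,53} then b 3 else if e = {45,54} then b 4 else
     if e = {12,21} then r 3 4 else if e = {13,31} then r 2 4 else if e = {14,41} then r 2 3 else
     if e = {23,32} then r 1 4 else if e = {24,42} then r 1 3 else r 1 2)" for e :: "nat set"
  have Wv: "W {15,51} = b 1" "W {25,52} = b 2" "W {35,53} = b 3" "W {45,54} = b 4"
    "W {12,21} = r 3 4" "W {13,31} = r 2 4" "W {14,41} = r 2 3" "W {23,32} = r 1 4"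
    "W {24,42} = r 1 3" "W {34,43} = r 1 2"
    by (simp_all add: W_def doubleton_eq_iff)
  have Wnn: "\<forall>e\<in>set E0l. W e \<ge> 0"
    unfolding E0l_def using Wv b0 A(5-10) by simp
  have e1: "F 1 0 0 0 = W{23,32}*W{45,54} + W{24,42}*W{35,53} + W{25,52}*W{34,43}"
    unfolding Wv using A(1) by (simp add: a_def algebra_simps)
  have e2: "F 0 1 0 0 = W{13,31}*W{45,54} + W{14,41}*W{35,53} + W{15,51}*W{34,43}"
    unfolding Wv using A(2) by (simp add: a_def algebra_simps)
  have e3: "F 0 0 1 0 = W{12,21}*W{45,54} + W{14,41}*W{25,52} + W{15,51}*W{24,42}"
    unfolding Wv using A(3) by (simp add: a_def algebra_simps)
  have e4: "F 0 0 0 1 = W{12,21}*W{35,53} + W{13,31}*W{25,52} + W{15,51}*W{23,32}"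
    unfolding Wv using A(4) by (simp add: a_def algebra_simps)
  have f3: "F 0 1 1 1 = W{15,51}" "F 1 0 1 1 = W{25,52}" "F 1 1 0 1 = W{35,53}" "F 1 1 1 0 = W{45,54}"
    unfolding Wv by (simp_all add: b_def)
  have ev: "F 0 0 0 0 = 0" "F 0 0 1 1 = 0" "F 0 1 0 1 = 0" "F 0 1 1 0 = 0"
     "F 1 0 0 1 = 0" "F 1 0 1 0 = 0" "F 1 1 0 0 = 0" "F 1 1 1 1 = 0"
    using even by simp_all
  show ?thesis unfolding has_matchings_circuit_def
  proof (intro exI conjI)
    show "valid_mcirc (Gc W)" using Gc_valid Wnn by blast
    have "F 1 0 0 0 = signature (Gc W) 1 0 0 0" unfolding sig_8 by (rule e1)
    moreover have "F 0 1 0 0 = signature (Gc W) 0 1 0 0" unfolding sig_4 by (rule e2)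
    moreover have "F 0 0 1 0 = signature (Gc W) 0 0 1 0" unfolding sig_2 by (rule e3)
    moreover have "F 0 0 0 1 = signature (Gc W) 0 0 0 1" unfolding sig_1 by (rule e4)
    moreover have "F 0 1 1 1 = signature (Gc W) 0 1 1 1" unfolding sig_7 by (rule f3(1))
    moreover have "F 1 0 1 1 = signature (Gc W) 1 0 1 1" unfolding sig_11 by (rule f3(2))
    moreover have "F 1 1 0 1 = signature (Gc W) 1 1 0 1" unfolding sig_13 by (rule f3(3))
    moreover have "F 1 1 1 0 = signature (Gc W) 1 1 1 0" unfolding sig_14 by (rule f3(4))
    moreover have "F 0 0 0 0 = signature (Gc W) 0 0 0 0" unfolding sig_0 by (rule ev(1))
    moreover have "F 0 0 1 1 = signature (Gc W) 0 0 1 1" unfolding sig_3 by (rule ev(2))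
    moreover have "F 0 1 0 1 = signature (Gc W) 0 1 0 1" unfolding sig_5 by (rule ev(3))
    moreover have "F 0 1 1 0 = signature (Gc W) 0 1 1 0" unfolding sig_6 by (rule ev(4))
    moreover have "F 1 0 0 1 = signature (Gc W) 1 0 0 1" unfolding sig_9 by (rule ev(5))
    moreover have "F 1 0 1 0 = signature (Gc W) 1 0 1 0" unfolding sig_10 by (rule ev(6))
    moreover have "F 1 1 0 0 = signature (Gc W) 1 1 0 0" unfolding sig_12 by (rule ev(7))
    moreover have "F 1 1 1 1 = signature (Gc W) 1 1 1 1" unfolding sig_15 by (rule ev(8))
    ultimately show "\<forall>x1\<in>{0,1}. \<forall>x2\<in>{0,1}. \<forall>x3\<in>{0,1}. \<forall>x4\<in>{0,1}. F x1 x2 x3 x4 = signature (Gc W) x1 x2 x3 x4"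
      by simp
  qed
qed
end
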